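(* For all closed terms $s,t\in T(\Sigma_{FTP_/})$: if $s/c^n\sim t/c^n$ for all $n\in\mathbb N$, then $s\sim t$ (i.e. the Approximation Induction Principle $x=y$ if $x/c^n=y/c^n$ for all $n$ is sound for bisimilarity on $T(\Sigma_{FTP_/})$).
   Context: Fix a finite nonempty set $\mathcal A$ of actions, a finite set $\mathcal P$ of predicates, a subset $\mathcal P^I\subseteq\mathcal P$ of implicit predicates, and for each $P\in\mathcal P^I$ a set $\mathcal A_P\subseteq\mathcal A$. $\Sigma_{FTP_/}$ consists of $\delta$, constants $\kappa_P$ ($P\in\mathcal P$), unary prefixes $a.\_$ ($a\in\mathcal A$), binary $+$ and binary $\cdot/\cdot$. Semantics on closed terms: the least transition and predicate relations closed under: $a.x\xrightarrow{a}x$; $x\xrightarrow{a}x'\Rightarrow x+y\xrightarrow{a}x'$; $y\xrightarrow{a}y'\Rightarrow x+y\xrightarrow{a}y'$; $P\kappa_P$; $Px\Rightarrow P(x+y)$; $Py\Rightarrow P(x+y)$; $Px\Rightarrow P(a.x)$ for $P\in\mathcal P^I$, $a\in\mathcal A_P$; $x\xrightarrow{a}x'$ and $h\xrightarrow{c'}h'\Rightarrow x/h\xrightarrow{a}x'/h'$ for all actions $a,c'$; $Px\Rightarrow P(x/h)$. A fixed action $c$ is used: $c^0=\delta$, $c^{n+1}=c.c^n$. Bisimilarity $\sim$: largest symmetric relation $R$ with $(s,t)\in R$, $s\xrightarrow{a}s'$ implying $t\xrightarrow{a}t'$ for some $t'$ with $(s',t')\in R$, and $Ps$ implying $Pt$.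 *)

theory Defs
  imports Main
begin

text \<open>Closed terms over the signature FTP with the operator x/h.
  Actions are elements of a finite type 'a (finite, nonempty),
  predicates are elements of a finite type 'p.\<close>

datatype ('a, 'p) tm =
    Delta
  | Kappa 'p
  | Pre 'a "('a, 'p) tm"
  | Plus "('a, 'p) tm" "('a, 'p) tm"
  | Slash "('a, 'p) tm" "('a, 'p) tm"

inductive step :: "('a, 'p) tm \<Rightarrow> 'a \<Rightarrow> ('a, 'p) tm \<Rightarrow> bool" where
  pre: "step (Pre a x) a x"
| plusL: "step x a x' \<Longrightarrow> step (Plus x y) a x'"
| plusR: "step y a y' \<Longrightarrow> step (Plus x y) a y'"
| slash: "step x a x' \<Longrightarrow> step h c' h' \<Longrightarrow> step (Slash x h) a (Slash x' h')"

text \<open>Predicate relation, parametrised by the set PI of implicit predicates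
  and the sets AP P of actions for implicit predicates P.\<close>
inductive holds :: "'p set \<Rightarrow> ('p \<Rightarrow> 'a set) \<Rightarrow> 'p \<Rightarrow> ('a, 'p) tm \<Rightarrow> bool"
  for PI :: "'p set" and AP :: "'p \<Rightarrow> 'a set" where
  kappa: "holds PI AP P (Kappa P)"
| plusL: "holds PI AP P x \<Longrightarrow> holds PI AP P (Plus x y)"
| plusR: "holds PI AP P y \<Longrightarrow> holds PI AP P (Plus x y)"
| pre: "P \<in> PI \<Longrightarrow> a \<in> AP P \<Longrightarrow> holds PI AP P x \<Longrightarrow> holds PI AP P (Pre a x)"
| slash: "holds PI AP P x \<Longrightarrow> holds PI AP P (Slash x h)"

fun cpow :: "'a \<Rightarrow> nat \<Rightarrow> ('a, 'p) tm" where
  "cpow c 0 = Delta"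
| "cpow c (Suc n) = Pre c (cpow c n)"

definition is_bisim :: "'p set \<Rightarrow> ('p \<Rightarrow> 'a set) \<Rightarrow> (('a, 'p) tm \<times> ('a, 'p) tm) set \<Rightarrow> bool" where
  "is_bisim PI AP R \<longleftrightarrow> sym R \<and>
     (\<forall>(s, t) \<in> R. (\<forall>a s'. step s a s' \<longrightarrow> (\<exists>t'. step t a t' \<and> (s', t') \<in> R)) \<and>
                    (\<forall>P. holds PI AP P s \<longrightarrow> holds PI AP P t))"

definition bisimilar :: "'p set \<Rightarrow> ('p \<Rightarrow> 'a set) \<Rightarrow> ('a, 'p) tm \<Rightarrow> ('a, 'p) tm \<Rightarrow> bool" where
  "bisimilar PI AP s t \<longleftrightarrow> (\<exists>R. is_bisim PI AP R \<and> (s, t) \<in> R)"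

end

theory Submission
  imports Defs
begin

fun depth :: "('a, 'p) tm \<Rightarrow> nat" where
  "depth Delta = 0"
| "depth (Kappa P) = 0"
| "depth (Pre a x) = Suc (depth x)"
| "depth (Plus x y) = max (depth x) (depth y)"
| "depth (Slash x h) = min (depth x) (depth h)"

lemma step_depth: "step x a x' \<Longrightarrow> depth x' < depth x"
  by (induction rule: step.induct) auto

lemma step_cpow: "step (cpow c n) a h \<longleftrightarrow> (0 < n \<and> a = c \<and> h = cpow c (n - 1))"
proof
  assume "step (cpow c n) a h"
  then show "0 < n \<and> a = c \<and> h = cpow c (n - 1)"
    by (cases n) (auto elim: step.cases)
next
  assume "0 < n \<and> a = c \<and> h = cpow c (n - 1)"
  then show "step (cpow c n) a h" by (cases n) (auto intro: step.pre)
qed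

lemma holds_slash: "holds PI AP P (Slash x h) \<longleftrightarrow> holds PI AP P x"
proof
  assume "holds PI AP P (Slash x h)"
  then show "holds PI AP P x" by (cases rule: holds.cases) auto
qed (rule holds.slash)

lemma step_slash: "step (Slash x h) a y \<longleftrightarrow> (\<exists>x' c' h'. y = Slash x' h' \<and> step x a x' \<and> step h c' h')"
proof
  assume "step (Slash x h) a y"
  then show "\<exists>x' c' h'. y = Slash x' h' \<and> step x a x' \<and> step h c' h'"
  proof (cases rule: step.cases)
    case slash
    then show ?thesis by blast
  qed
next
  assume "\<exists>x' c' h'. y = Slash x' h' \<and> step x a x' \<and> step h c' h'"
  then obtain x' c' h' where "y = Slash x' h'" "step x a x'" "step h c' h'" by blast
  then show "step (Slash x h) a y" by (simp add: step.slash)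
qed

lemma bis_step: "is_bisim PI AP R \<Longrightarrow> (s,t) \<in> R \<Longrightarrow> step s a s' \<Longrightarrow> \<exists>t'. step t a t' \<and> (s', t') \<in> R"
  unfolding is_bisim_def by (drule conjunct2, drule bspec, assumption, simp)

lemma bis_holds: "is_bisim PI AP R \<Longrightarrow> (s,t) \<in> R \<Longrightarrow> holds PI AP P s \<Longrightarrow> holds PI AP P t"
  unfolding is_bisim_def by (drule conjunct2, drule bspec, assumption, simp)

lemma bis_sym: "is_bisim PI AP R \<Longrightarrow> sym R"
  unfolding is_bisim_def by simp

lemma bisim_trans:
  assumes "bisimilar PI AP s t" "bisimilar PI AP t u"
  shows "bisimilar PI AP s u"
proof -
  obtain R where R: "is_bisim PI AP R" "(s,t) \<in> R" using assms(1) bisimilar_def by blast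
  obtain S where S: "is_bisim PI AP S" "(t,u) \<in> S" using assms(2) bisimilar_def by blast
  let ?Q = "R O S \<union> S O R"
  have symR: "sym R" and symS: "sym S" using R S bis_sym by blast+
  have "sym ?Q"
  proof (rule symI)
    fix x y assume "(x,y) \<in> ?Q"
    then show "(y,x) \<in> ?Q"
    proof
      assume "(x,y) \<in> R O S"
      then obtain z where "(x,z) \<in> R" "(z,y) \<in> S" by blast
      then have "(z,x) \<in> R" "(y,z) \<in> S" using symR symS symD by metis+
      then show ?thesis by blast
    next
      assume "(x,y) \<in> S O R"
      then obtain z where "(x,z) \<in> S" "(z,y) \<in> R" by blast
      then have "(z,x) \<in> S" "(y,z) \<in> R" using symR symS symD by metis+
      then show ?thesis by blast
    qed
  qed
  moreover have "\<forall>(x, z) \<in> ?Q. (\<forall>a x'. step x a x' \<longrightarrow> (\<exists>z'. step z a z' \<and> (x', z') \<in> ?Q)) \<and>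
                    (\<forall>P. holds PI AP P x \<longrightarrow> holds PI AP P z)"
  proof -
    have gen: "\<And>A B x y z. is_bisim PI AP A \<Longrightarrow> is_bisim PI AP B \<Longrightarrow> (x,y) \<in> A \<Longrightarrow> (y,z) \<in> B \<Longrightarrow>
       (\<forall>a x'. step x a x' \<longrightarrow> (\<exists>z'. step z a z' \<and> (x', z') \<in> A O B)) \<and>
                    (\<forall>P. holds PI AP P x \<longrightarrow> holds PI AP P z)"
    proof -
      fix A B x y z
      assume A: "is_bisim PI AP A" and B: "is_bisim PI AP B" and xy: "(x,y) \<in> A" and yz: "(y,z) \<in> B"
      show "(\<forall>a x'. step x a x' \<longrightarrow> (\<exists>z'. step z a z' \<and> (x', z') \<in> A O B)) \<and>
                    (\<forall>P. holds PI AP P x \<longrightarrow> holds PI AP P z)"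
      proof (intro conjI allI impI)
        fix a x' assume "step x a x'"
        then obtain y' where "step y a y'" "(x',y') \<in> A" using bis_step[OF A xy] by blast
        then obtain z' where "step z a z'" "(y',z') \<in> B" using bis_step[OF B yz] by blast
        then show "\<exists>z'. step z a z' \<and> (x', z') \<in> A O B" using \<open>(x',y') \<in> A\<close> by blast
      next
        fix P assume "holds PI AP P x"
        then have "holds PI AP P y" using bis_holds[OF A xy] by blast
        then show "holds PI AP P z" using bis_holds[OF B yz] by blast
      qed
    qed
    show ?thesis
    proof (intro ballI)
      fix p assume "p \<in> ?Q"
      then obtain x z where p: "p = (x,z)" by (cases p)
      show "case p of (x, z) \<Rightarrow> (\<forall>a x'. step x a x' \<longrightarrow> (\<exists>z'. step z a z' \<and> (x', z') \<in> ?Q)) \<and>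
                    (\<forall>P. holds PI AP P x \<longrightarrow> holds PI AP P z)"
      proof (cases "(x,z) \<in> R O S")
        case True
        then obtain y where "(x,y) \<in> R" "(y,z) \<in> S" by blast
        from gen[OF R(1) S(1) this] show ?thesis unfolding p by blast
      next
        case False
        then have "(x,z) \<in> S O R" using \<open>p \<in> ?Q\<close> p by blast
        then obtain y where "(x,y) \<in> S" "(y,z) \<in> R" by blast
        from gen[OF S(1) R(1) this] show ?thesis unfolding p by blast
      qed
    qed
  qed
  ultimately have "is_bisim PI AP ?Q" unfolding is_bisim_def by (rule conjI)
  moreover have "(s,u) \<in> ?Q" using R S by blast
  ultimately show ?thesis unfolding bisimilar_def by blast
qed

lemma approx:
  fixes x :: "('a,'p) tm"
  assumes "depth x \<le> n"
  shows "bisimilar PI AP x (Slash x (cpow c n))"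
proof -
  define B0 :: "(('a,'p) tm \<times> ('a,'p) tm) set" where "B0 = {(y, Slash y (cpow c m)) | y m. depth y \<le> m}"
  define B where "B = B0 \<union> B0\<inverse>"
  have "sym B" unfolding B_def by (simp add: sym_Un_converse)
  moreover have "\<forall>(p, q) \<in> B. (\<forall>a p'. step p a p' \<longrightarrow> (\<exists>q'. step q a q' \<and> (p', q') \<in> B)) \<and>
                    (\<forall>P. holds PI AP P p \<longrightarrow> holds PI AP P q)"
  proof (intro ballI)
    fix pq assume "pq \<in> B"
    then consider (L) y m where "pq = (y, Slash y (cpow c m))" "depth y \<le> m"
      | (R) y m where "pq = (Slash y (cpow c m), y)" "depth y \<le> m"
      unfolding B_def B0_def by blast
    then show "case pq of (p, q) \<Rightarrow> (\<forall>a p'. step p a p' \<longrightarrow> (\<exists>q'. step q a q' \<and> (p', q') \<in> B)) \<and>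
                    (\<forall>P. holds PI AP P p \<longrightarrow> holds PI AP P q)"
    proof cases
      case L
      show ?thesis unfolding L(1)
      proof (simp only: holds_slash prod.case, intro conjI allI impI)
        fix a p' assume st: "step y a p'"
        have d: "depth p' < depth y" using step_depth[OF st] .
        then have m: "0 < m" using L by simp
        have "step (Slash y (cpow c m)) a (Slash p' (cpow c (m - 1)))"
          using step.slash[OF st, of "cpow c m" c "cpow c (m-1)"] m step_cpow[of c m c "cpow c (m-1)"] by simp
        moreover have "(p', Slash p' (cpow c (m - 1))) \<in> B0"
          unfolding B0_def using d L(2) by auto
        then have "(p', Slash p' (cpow c (m - 1))) \<in> B" unfolding B_def by simp
        ultimately show "\<exists>q'. step (Slash y (cpow c m)) a q' \<and> (p', q') \<in> B" by blast
      qed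
    next
      case R
      show ?thesis unfolding R(1)
      proof (simp only: holds_slash prod.case, intro conjI allI impI)
        fix a p' assume st: "step (Slash y (cpow c m)) a p'"
        obtain x' c' h' where p': "p' = Slash x' h'" "step y a x'" "step (cpow c m) c' h'"
          using step_slash[THEN iffD1, OF st] by blast
        have h': "h' = cpow c (m - 1)" using step_cpow[THEN iffD1, OF p'(3)] by simp
        have "depth x' < depth y" using step_depth[OF p'(2)] .
        then have "depth x' \<le> m - 1" using R(2) by simp
        then have "(x', Slash x' (cpow c (m - 1))) \<in> B0" unfolding B0_def by blast
        then have "(Slash x' h', x') \<in> B" unfolding B_def h' by simp
        then show "\<exists>q'. step y a q' \<and> (p', q') \<in> B" using p' by blast
      qed
    qed
  qed
  ultimately have "is_bisim PI AP B" unfolding is_bisim_def by (rule conjI)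
  moreover have "(x, Slash x (cpow c n)) \<in> B" unfolding B_def B0_def using assms by blast
  ultimately show ?thesis unfolding bisimilar_def by blast
qed

lemma bisim_sym: "bisimilar PI AP s t \<Longrightarrow> bisimilar PI AP t s"
proof -
  assume "bisimilar PI AP s t"
  then obtain R where R: "is_bisim PI AP R" "(s,t) \<in> R" unfolding bisimilar_def by blast
  have "(t,s) \<in> R" using symD[OF bis_sym[OF R(1)] R(2)] .
  then show ?thesis unfolding bisimilar_def using R(1) by blast
qed

theorem lemma4:
  fixes PI :: "('p::finite) set" and AP :: "'p \<Rightarrow> ('a::finite) set"
    and c :: 'a and s t :: "('a, 'p) tm"
  assumes "\<forall>n. bisimilar PI AP (Slash s (cpow c n)) (Slash t (cpow c n))"
  shows "bisimilar PI AP s t"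
proof -
  define N where "N = max (depth s) (depth t)"
  have 1: "bisimilar PI AP s (Slash s (cpow c N))" by (rule approx) (simp add: N_def)
  have 2: "bisimilar PI AP t (Slash t (cpow c N))" by (rule approx) (simp add: N_def)
  show ?thesis using bisim_trans[OF bisim_trans[OF 1 assms[rule_format, of N]] bisim_sym[OF 2]] .
qed

end
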